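(* Consider the controlled SEIR system described in the context, with stage cost weight $\lambda\in(0,1]$. There exists a constant $C\in\mathbb{R}_{\geq 0}$ such that $$J_{\infty}(\mathbf{x}^0,\mathbf{u}_{\mathrm{nom}})\leq C\quad\text{for all }\mathbf{x}^0\in\mathbb{X}_{\mathrm{M}},$$ where $\mathbf{u}_{\mathrm{nom}}\in\mathcal{U}_\infty$ denotes the constant input $\mathbf{u}_{\mathrm{nom}}(t)=(\beta_{\mathrm{nom}},\gamma_{\mathrm{nom}})^\top$ for all $t\ge 0$.
   Context: Parameters: $\eta>0$, $0<\beta_{\min}<\beta_{\mathrm{nom}}$, $0<\gamma_{\mathrm{nom}}<\gamma_{\max}$, $I_{\max}\in(0,1]$. State $\mathbf{x}=(x_1,x_2,x_3)^\top\in\mathbb{R}^3$ (susceptible, exposed, infectious proportions), input $\mathbf{u}=(u_1,u_2)^\top$, dynamics $\dot{\mathbf{x}}=f(\mathbf{x},\mathbf{u})$ with $f(\mathbf{x},\mathbf{u})=(-u_1x_1x_3,\; u_1x_1x_3-\eta x_2,\; \eta x_2-u_2x_3)^\top$. Input constraint set $\mathbb{U}=[\beta_{\min},\beta_{\mathrm{nom}}]\times[\gamma_{\mathrm{nom}},\gamma_{\max}]$; $\mathcal{U}_\infty$ is the set of Lebesgue measurable functions $[0,\infty)\to\mathbb{U}$. State constraint set $\mathbb{X}=\{\mathbf{x}\in[0,1]^3: x_3\le I_{\max},\ x_1+x_2+x_3\le 1\}$. For $\mathbf{x}^0\in[0,1]^3$ with $x_1^0+x_2^0+x_3^0\le1$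 and $\mathbf{u}\in\mathcal{U}_\infty$, $\mathbf{x}(t;\mathbf{x}^0,\mathbf{u})$ denotes the unique absolutely continuous solution (it stays in $[0,1]^3$). Let $\bar x_1=\gamma_{\mathrm{nom}}/\beta_{\mathrm{nom}}$, $\bar x_2=\gamma_{\mathrm{nom}}I_{\max}/\eta$ and $\mathbb{X}_{\mathrm{M}}=\{\mathbf{x}\in\mathbb{X}: x_1\le\bar x_1,\ x_2\le\bar x_2\}$. Stage cost, for fixed $\lambda\in(0,1]$: $\ell(\mathbf{x},\mathbf{u})=\lambda(x_2^2+x_3^2)+(1-\lambda)\|\mathbf{u}-\mathbf{u}_{\mathrm{nom}}\|^2$ with $\mathbf{u}_{\mathrm{nom}}=(\beta_{\mathrm{nom}},\gamma_{\mathrm{nom}})^\top$ and $\|\cdot\|$ the Euclidean norm. Cost functional $J_\infty(\mathbf{x}^0,\mathbf{u})=\int_0^\infty \ell(\mathbf{x}(s;\mathbf{x}^0,\mathbf{u}),\mathbf{u}(s))\,ds$. *)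

theory Defs
  imports "HOL-Analysis.Analysis"
begin

definition seir_f :: "real \<Rightarrow> real^3 \<Rightarrow> real^2 \<Rightarrow> real^3" where
  "seir_f eta x u = vector [- (u$1) * (x$1) * (x$3),
                            (u$1) * (x$1) * (x$3) - eta * (x$2),
                            eta * (x$2) - (u$2) * (x$3)]"

definition u_nom :: "real \<Rightarrow> real \<Rightarrow> real^2" where
  "u_nom beta_nom gamma_nom = vector [beta_nom, gamma_nom]"

definition X_set :: "real \<Rightarrow> (real^3) set" where
  "X_set I_max = {x. (\<forall>i. 0 \<le> x$i \<and> x$i \<le> 1) \<and> x$3 \<le> I_max \<and> x$1 + x$2 + x$3 \<le> 1}"

definition XM_set :: "real \<Rightarrow> real \<Rightarrow> real \<Rightarrow> real \<Rightarrow> (real^3) set" where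
  "XM_set eta beta_nom gamma_nom I_max =
     {x \<in> X_set I_max. x$1 \<le> gamma_nom / beta_nom \<and> x$2 \<le> gamma_nom * I_max / eta}"

definition stage_cost :: "real \<Rightarrow> real \<Rightarrow> real \<Rightarrow> real^3 \<Rightarrow> real^2 \<Rightarrow> real" where
  "stage_cost lam beta_nom gamma_nom x u =
     lam * ((x$2)^2 + (x$3)^2) + (1 - lam) * (norm (u - u_nom beta_nom gamma_nom))^2"

definition seir_solution :: "real \<Rightarrow> (real \<Rightarrow> real^2) \<Rightarrow> real^3 \<Rightarrow> (real \<Rightarrow> real^3) \<Rightarrow> bool" where
  "seir_solution eta u x0 x \<longleftrightarrow> x 0 = x0 \<and>
     (\<forall>t\<ge>0. (x has_vector_derivative seir_f eta (x t) (u t)) (at t within {0..}))"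

definition J_inf :: "real \<Rightarrow> real \<Rightarrow> real \<Rightarrow> (real \<Rightarrow> real^3) \<Rightarrow> (real \<Rightarrow> real^2) \<Rightarrow> ennreal" where
  "J_inf lam beta_nom gamma_nom x u =
     (\<integral>\<^sup>+ s\<in>{0..}. ennreal (stage_cost lam beta_nom gamma_nom (x s) (u s)) \<partial>lborel)"

end

theory Submission
  imports Defs
begin


lemma nonincr:
  fixes f f' :: "real \<Rightarrow> real"
  assumes "0 \<le> a" "a \<le> b"
    and d: "\<And>t. 0 \<le> t \<Longrightarrow> (f has_real_derivative f' t) (at t within {0..})"
    and n: "\<And>t. a < t \<Longrightarrow> t < b \<Longrightarrow> f' t \<le> 0"
  shows "f b \<le> f a"
proof (cases "a = b")
  case True then show ?thesis by simp
next
  case False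
  then have ab: "a < b" using assms by simp
  have dat: "(f has_real_derivative f' t) (at t)" if "0 < t" for t
  proof -
    have "at t within {0..} = at t" using that by (intro at_within_interior) simp
    then show ?thesis using d[of t] that by simp
  qed
  have c0: "continuous_on {0..} f"
    apply (rule continuous_on_vector_derivative[of _ _ f'])
    using d by (simp add: has_real_derivative_iff_has_vector_derivative)
  have cont: "continuous_on {a..b} f"
    using c0 by (rule continuous_on_subset) (use assms in auto)
  have dif: "f differentiable (at x)" if "a < x" "x < b" for x
    using dat[of x] that assms(1) unfolding real_differentiable_def by auto
  obtain l z where z: "a < z" "z < b" "DERIV f z :> l" "f b - f a = (b - a) * l"
    using MVT[OF ab cont dif] by blast
  have "l = f' z" using DERIV_unique[OF z(3) dat[of z]] z assms by simp
  then have "l \<le> 0" using n z by simp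
  then have "(b - a) * l \<le> 0" using ab by (simp add: mult_nonneg_nonpos)
  then show ?thesis using z(4) by simp
qed


lemma qderiv: "((\<lambda>y::real. (min y 0)^2) has_real_derivative 2 * min y 0) (at y)"
proof (cases "y < 0")
  case True
  have "((\<lambda>y::real. y^2) has_real_derivative 2 * min y 0) (at y)"
    using True by (auto intro!: derivative_eq_intros)
  then show ?thesis
    by (rule has_field_derivative_transform_within_open[where S="{..<0}"]) (use True in auto)
next
  case False
  show ?thesis
  proof (cases "y > 0")
    case True
    have "((\<lambda>y::real. 0) has_real_derivative 2 * min y 0) (at y)" using True by simp
    then show ?thesis
      by (rule has_field_derivative_transform_within_open[where S="{0<..}"]) (use True in auto)
  next
    case False
    with \<open>\<not> y < 0\<close> have y: "y = 0" by simp
    have "((\<lambda>h. (min h 0)^2 / h) \<longlongrightarrow> 0) (at (0::real))"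
    proof (rule Lim_null_comparison)
      have "norm ((min h 0)^2 / h) \<le> \<bar>h\<bar>" for h :: real
      proof (cases "h < 0")
        case True
        then have "(min h 0)^2 / h = h" by (simp add: power2_eq_square)
        then show ?thesis by simp
      next
        case False
        then show ?thesis by simp
      qed
      then show "\<forall>\<^sub>F h in at (0::real). norm ((min h 0)^2 / h) \<le> \<bar>h\<bar>"
        by (intro always_eventually) auto
      show "((\<lambda>h::real. \<bar>h\<bar>) \<longlongrightarrow> 0) (at 0)"
        using tendsto_rabs[OF tendsto_ident_at[of "0::real" UNIV]] by simp
    qed
    then show ?thesis using y by (simp add: has_field_derivative_iff)
  qed
qed



lemma two_ab: "2 * \<bar>x\<bar> * \<bar>y\<bar> \<le> x^2 + (y::real)^2"
proof -
  have "0 \<le> (\<bar>x\<bar> - \<bar>y\<bar>)^2" by simp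
  then show ?thesis by (simp add: power2_eq_square algebra_simps)
qed

lemma cross_term:
  fixes a bb c :: real
  assumes "\<bar>a\<bar> \<le> M" "\<bar>c\<bar> \<le> M"
  shows "2 * min bb 0 * (a * c) \<le> 2 * M * ((min a 0)^2 + (min bb 0)^2 + (min c 0)^2)"
proof (cases "a < 0")
  case True
  have "2 * min bb 0 * (a * c) \<le> \<bar>2 * min bb 0 * (a * c)\<bar>" by (rule abs_ge_self)
  also have "\<dots> = \<bar>c\<bar> * (2 * \<bar>min bb 0\<bar> * \<bar>a\<bar>)"
    by (simp add: abs_mult algebra_simps)
  also have "\<dots> \<le> \<bar>c\<bar> * ((min bb 0)^2 + a^2)"
    by (intro mult_left_mono two_ab) simp
  also have "\<dots> \<le> M * ((min bb 0)^2 + a^2)"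
    using assms by (intro mult_right_mono) auto
  also have "\<dots> \<le> 2 * M * ((min a 0)^2 + (min bb 0)^2 + (min c 0)^2)"
    using True assms(2) by (simp add: algebra_simps)
  finally show ?thesis .
next
  case a: False
  show ?thesis
  proof (cases "c < 0")
    case True
    have "2 * min bb 0 * (a * c) \<le> \<bar>2 * min bb 0 * (a * c)\<bar>" by (rule abs_ge_self)
    also have "\<dots> = \<bar>a\<bar> * (2 * \<bar>min bb 0\<bar> * \<bar>c\<bar>)"
      by (simp add: abs_mult algebra_simps)
    also have "\<dots> \<le> \<bar>a\<bar> * ((min bb 0)^2 + c^2)"
      by (intro mult_left_mono two_ab) simp
    also have "\<dots> \<le> M * ((min bb 0)^2 + c^2)"
      using assms by (intro mult_right_mono) auto
    also have "\<dots> \<le> 2 * M * ((min a 0)^2 + (min bb 0)^2 + (min c 0)^2)"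
      using True assms(2) by (simp add: algebra_simps)
    finally show ?thesis .
  next
    case False
    have "min bb 0 * (a * c) \<le> 0"
      using a False by (intro mult_nonpos_nonneg) auto
    moreover have "0 \<le> M" using assms(1) by simp
    moreover have "0 \<le> 2 * M * ((min a 0)^2 + (min bb 0)^2 + (min c 0)^2)"
      using \<open>0 \<le> M\<close> by (intro mult_nonneg_nonneg) auto
    ultimately show ?thesis by linarith
  qed
qed

lemma keyineq:
  fixes a bb c b e g M :: real
  assumes "b > 0" "e > 0" "g > 0" "\<bar>a\<bar> \<le> M" "\<bar>c\<bar> \<le> M"
  shows "2 * min a 0 * (- b * a * c) + 2 * min bb 0 * (b * a * c - e * bb)
           + 2 * min c 0 * (e * bb - g * c)
         \<le> (6 * b * M + e) * ((min a 0)^2 + (min bb 0)^2 + (min c 0)^2)"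
proof -
  define V where "V = (min a 0)^2 + (min bb 0)^2 + (min c 0)^2"
  have M0: "0 \<le> M" using assms(4) by simp
  have V0: "0 \<le> V" unfolding V_def by simp
  have na: "min a 0 * a = (min a 0)^2" by (simp add: min_def power2_eq_square)
  have nb: "min bb 0 * bb = (min bb 0)^2" by (simp add: min_def power2_eq_square)
  have nc: "min c 0 * c = (min c 0)^2" by (simp add: min_def power2_eq_square)
  have t1: "2 * min a 0 * (- b * a * c) \<le> 2 * b * M * V"
  proof -
    have "2 * min a 0 * (- b * a * c) = 2 * b * (min a 0)^2 * (- c)"
      using na by (simp add: algebra_simps)
    also have "\<dots> \<le> 2 * b * (min a 0)^2 * M"
      using assms by (intro mult_left_mono) auto
    also have "\<dots> = (2 * b * M) * (min a 0)^2" by (simp add: algebra_simps)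
    also have "\<dots> \<le> (2 * b * M) * V"
      using assms M0 unfolding V_def by (intro mult_left_mono) auto
    finally show ?thesis .
  qed
  have t2: "2 * min bb 0 * (b * a * c) \<le> 2 * b * M * V"
  proof -
    have "2 * min bb 0 * (b * a * c) = b * (2 * min bb 0 * (a * c))" by (simp add: algebra_simps)
    also have "\<dots> \<le> b * (2 * M * V)"
      unfolding V_def using assms by (intro mult_left_mono cross_term) auto
    finally show ?thesis by (simp add: algebra_simps)
  qed
  have t3: "2 * min bb 0 * (- e * bb) \<le> 0"
  proof -
    have "2 * min bb 0 * (- e * bb) = -(2 * e * (min bb 0 * bb))" by (simp add: algebra_simps)
    also have "\<dots> = -(2 * e * (min bb 0)^2)" using nb by simp
    also have "\<dots> \<le> 0" using assms by simp
    finally show ?thesis .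
  qed
  have t4: "2 * min c 0 * (e * bb) \<le> e * V"
  proof -
    have h1: "min c 0 * bb \<le> min c 0 * min bb 0"
      by (rule mult_left_mono_neg) auto
    have h2: "2 * (min c 0 * min bb 0) \<le> (min c 0)^2 + (min bb 0)^2"
      using two_ab[of "min c 0" "min bb 0"] by (simp add: abs_mult_pos abs_mult)
    have h3: "0 \<le> (min a 0)^2" by simp
    have "2 * (min c 0 * bb) \<le> V" using h1 h2 h3 unfolding V_def by linarith
    then have "e * (2 * (min c 0 * bb)) \<le> e * V" using assms by (intro mult_left_mono) auto
    then show ?thesis by (simp add: algebra_simps)
  qed
  have t5: "2 * min c 0 * (- g * c) \<le> 0"
  proof -
    have "2 * min c 0 * (- g * c) = -(2 * g * (min c 0 * c))" by (simp add: algebra_simps)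
    also have "\<dots> = -(2 * g * (min c 0)^2)" using nc by simp
    also have "\<dots> \<le> 0" using assms by simp
    finally show ?thesis .
  qed
  have "2 * min a 0 * (- b * a * c) + 2 * min bb 0 * (b * a * c - e * bb)
           + 2 * min c 0 * (e * bb - g * c)
      = 2 * min a 0 * (- b * a * c) + 2 * min bb 0 * (b * a * c) + 2 * min bb 0 * (- e * bb)
           + 2 * min c 0 * (e * bb) + 2 * min c 0 * (- g * c)"
    by (simp add: algebra_simps)
  also have "\<dots> \<le> 2 * b * M * V + 2 * b * M * V + 0 + e * V + 0"
    using t1 t2 t3 t4 t5 by linarith
  also have "\<dots> = (4 * b * M + e) * V" by (simp add: algebra_simps)
  also have "\<dots> \<le> (6 * b * M + e) * V"
    using assms M0 V0 by (intro mult_right_mono) auto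
  finally show ?thesis unfolding V_def .
qed


lemma positivity:
  fixes S E I :: "real \<Rightarrow> real" and b e g T :: real
  assumes bp: "b > 0" and ep: "e > 0" and gp: "g > 0"
  and dS: "\<And>t. 0 \<le> t \<Longrightarrow> (S has_real_derivative (- b * S t * I t)) (at t within {0..})"
  and dE: "\<And>t. 0 \<le> t \<Longrightarrow> (E has_real_derivative (b * S t * I t - e * E t)) (at t within {0..})"
  and dI: "\<And>t. 0 \<le> t \<Longrightarrow> (I has_real_derivative (e * E t - g * I t)) (at t within {0..})"
  and S0: "0 \<le> S 0" and E0: "0 \<le> E 0" and I0: "0 \<le> I 0" and T0: "0 \<le> T"
  shows "0 \<le> S T \<and> 0 \<le> E T \<and> 0 \<le> I T"
proof -
  have cS: "continuous_on {0..} S"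
    apply (rule continuous_on_vector_derivative[of _ _ "\<lambda>t. - b * S t * I t"])
    using dS by (simp add: has_real_derivative_iff_has_vector_derivative)
  have cI: "continuous_on {0..} I"
    apply (rule continuous_on_vector_derivative[of _ _ "\<lambda>t. e * E t - g * I t"])
    using dI by (simp add: has_real_derivative_iff_has_vector_derivative)
  have "continuous_on {0..T} (\<lambda>t. \<bar>S t\<bar> + \<bar>I t\<bar>)"
    using continuous_on_subset[OF cS, of "{0..T}"] continuous_on_subset[OF cI, of "{0..T}"]
    by (intro continuous_intros) auto
  then have "compact ((\<lambda>t. \<bar>S t\<bar> + \<bar>I t\<bar>) ` {0..T})"
    by (intro compact_continuous_image) auto
  then have "bounded ((\<lambda>t. \<bar>S t\<bar> + \<bar>I t\<bar>) ` {0..T})" by (rule compact_imp_bounded)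
  then obtain M0 where M0: "\<And>y. y \<in> (\<lambda>t. \<bar>S t\<bar> + \<bar>I t\<bar>) ` {0..T} \<Longrightarrow> \<bar>y\<bar> \<le> M0"
    unfolding bounded_real by blast
  define M where "M = max M0 0"
  have MS: "\<bar>S t\<bar> \<le> M" and MI: "\<bar>I t\<bar> \<le> M" if "0 \<le> t" "t \<le> T" for t
  proof -
    have "\<bar>\<bar>S t\<bar> + \<bar>I t\<bar>\<bar> \<le> M0" using M0[of "\<bar>S t\<bar> + \<bar>I t\<bar>"] that by auto
    then show "\<bar>S t\<bar> \<le> M" "\<bar>I t\<bar> \<le> M" unfolding M_def by auto
  qed
  define K where "K = 6 * b * M + e"
  define V where "V t = (min (S t) 0)^2 + (min (E t) 0)^2 + (min (I t) 0)^2" for t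
  define V' where "V' t = 2 * min (S t) 0 * (- b * S t * I t) + 2 * min (E t) 0 * (b * S t * I t - e * E t)
           + 2 * min (I t) 0 * (e * E t - g * I t)" for t
  have dV: "(V has_real_derivative V' t) (at t within {0..})" if "0 \<le> t" for t
  proof -
    have a: "((\<lambda>t. (min (S t) 0)^2) has_real_derivative 2 * min (S t) 0 * (- b * S t * I t)) (at t within {0..})"
      using DERIV_chain2[OF qderiv dS[OF that]] .
    have bb: "((\<lambda>t. (min (E t) 0)^2) has_real_derivative 2 * min (E t) 0 * (b * S t * I t - e * E t)) (at t within {0..})"
      using DERIV_chain2[OF qderiv dE[OF that]] .
    have c: "((\<lambda>t. (min (I t) 0)^2) has_real_derivative 2 * min (I t) 0 * (e * E t - g * I t)) (at t within {0..})"
      using DERIV_chain2[OF qderiv dI[OF that]] .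
    show ?thesis unfolding V_def[abs_def] V'_def using DERIV_add[OF DERIV_add[OF a bb] c] by simp
  qed
  define U where "U t = V t * exp (- K * t)" for t
  have dU: "(U has_real_derivative (V' t * exp (- K * t) + (exp (- K * t) * (- K)) * V t)) (at t within {0..})"
    if "0 \<le> t" for t
  proof -
    have ex: "((\<lambda>t. exp (- K * t)) has_real_derivative exp (- K * t) * (- K)) (at t within {0..})"
      by (auto intro!: derivative_eq_intros)
    show ?thesis unfolding U_def[abs_def] using DERIV_mult[OF dV[OF that] ex] .
  qed
  have Uneg: "V' t * exp (- K * t) + (exp (- K * t) * (- K)) * V t \<le> 0" if "0 < t" "t < T" for t
  proof -
    have "V' t \<le> K * V t"
      unfolding V'_def V_def K_def
      using keyineq[OF bp ep gp MS[of t] MI[of t]] that by simp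
    then have "exp (- K * t) * (V' t - K * V t) \<le> 0"
      by (intro mult_nonneg_nonpos) auto
    then show ?thesis by (simp add: algebra_simps)
  qed
  have "U T \<le> U 0"
    by (rule nonincr[OF order_refl T0 dU Uneg])
  moreover have "U 0 = 0" unfolding U_def V_def using S0 E0 I0 by simp
  ultimately have "V T * exp (- K * T) \<le> 0" unfolding U_def by simp
  then have "V T \<le> 0" by (simp add: mult_le_0_iff)
  then have "(min (S T) 0)^2 = 0 \<and> (min (E T) 0)^2 = 0 \<and> (min (I T) 0)^2 = 0"
    unfolding V_def using zero_le_power2[of "min (S T) 0"] zero_le_power2[of "min (E T) 0"]
      zero_le_power2[of "min (I T) 0"] by linarith
  then show ?thesis by (simp add: min_def split: if_splits)
qed


lemma cost_bound:
  fixes S E I :: "real \<Rightarrow> real" and b e g lam :: real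
  assumes bp: "b > 0" and ep: "e > 0" and gp: "g > 0" and lp: "0 \<le> lam"
  and dS: "\<And>t. 0 \<le> t \<Longrightarrow> (S has_real_derivative (- b * S t * I t)) (at t within {0..})"
  and dE: "\<And>t. 0 \<le> t \<Longrightarrow> (E has_real_derivative (b * S t * I t - e * E t)) (at t within {0..})"
  and dI: "\<And>t. 0 \<le> t \<Longrightarrow> (I has_real_derivative (e * E t - g * I t)) (at t within {0..})"
  and S0: "0 \<le> S 0" and E0: "0 \<le> E 0" and I0: "0 \<le> I 0" and N0: "S 0 + E 0 + I 0 \<le> 1"
  shows "(\<integral>\<^sup>+ s. ennreal (lam * ((E s)^2 + (I s)^2)) * indicator {0..} s \<partial>lborel)
          \<le> ennreal (lam * (1 / e + 1 / g))"
proof -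
  have pos: "0 \<le> S t \<and> 0 \<le> E t \<and> 0 \<le> I t" if "0 \<le> t" for t
    using positivity[OF bp ep gp dS dE dI S0 E0 I0 that] .
  define N where "N t = S t + E t + I t" for t
  have dN: "(N has_real_derivative (- g * I t)) (at t within {0..})" if "0 \<le> t" for t
  proof -
    have "(N has_real_derivative (- b * S t * I t + (b * S t * I t - e * E t) + (e * E t - g * I t))) (at t within {0..})"
      unfolding N_def[abs_def] using DERIV_add[OF DERIV_add[OF dS[OF that] dE[OF that]] dI[OF that]] by simp
    then show ?thesis by (simp add: algebra_simps)
  qed
  have Nle: "N t \<le> 1" if "0 \<le> t" for t
  proof -
    have "N t \<le> N 0"
      by (rule nonincr[OF order_refl that dN]) (use pos gp in \<open>auto intro: mult_nonneg_nonneg\<close>)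
    then show ?thesis using N0 unfolding N_def by simp
  qed
  have E1: "E t \<le> 1" and I1: "I t \<le> 1" if "0 \<le> t" for t
    using Nle[OF that] pos[OF that] unfolding N_def by auto
  define h where "h t = lam * (E t + I t)" for t
  define W where "W t = lam * ((S t + E t) / e + (S t + E t + I t) / g)" for t
  have dW: "((\<lambda>t. - W t) has_real_derivative h t) (at t within {0..})" if "0 \<le> t" for t
  proof -
    have "((\<lambda>t. - W t) has_real_derivative
       - (lam * ((- b * S t * I t + (b * S t * I t - e * E t)) / e
          + (- b * S t * I t + (b * S t * I t - e * E t) + (e * E t - g * I t)) / g))) (at t within {0..})"
      unfolding W_def[abs_def]
      by (intro DERIV_minus DERIV_cmult DERIV_add DERIV_cdivide dS dE dI that)
    then show ?thesis unfolding h_def using ep gp by (simp add: field_simps)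
  qed
  have hint: "(h has_integral (W 0 - W n)) {0..n}" if "0 \<le> n" for n
  proof -
    have "(h has_integral ((\<lambda>t. - W t) n - (\<lambda>t. - W t) 0)) {0..n}"
    proof (rule fundamental_theorem_of_calculus[OF that])
      fix t assume t: "t \<in> {0..n}"
      have "((\<lambda>t. - W t) has_vector_derivative h t) (at t within {0..})"
        using dW[of t] t by (simp add: has_real_derivative_iff_has_vector_derivative)
      then show "((\<lambda>t. - W t) has_vector_derivative h t) (at t within {0..n})"
        by (rule has_vector_derivative_within_subset) auto
    qed
    then show ?thesis by simp
  qed
  define C where "C = lam * (1 / e + 1 / g)"
  have W0: "0 \<le> W t" if "0 \<le> t" for t
    unfolding W_def using pos[OF that] lp ep gp by (intro mult_nonneg_nonneg add_nonneg_nonneg divide_nonneg_pos) auto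
  have WC: "W 0 \<le> C"
  proof -
    have "(S 0 + E 0) / e \<le> 1 / e" using N0 I0 ep by (intro divide_right_mono) auto
    moreover have "(S 0 + E 0 + I 0) / g \<le> 1 / g" using N0 gp by (intro divide_right_mono) auto
    ultimately show ?thesis unfolding W_def C_def using lp by (intro mult_left_mono) auto
  qed
  have h0: "0 \<le> h t" if "0 \<le> t" for t
    unfolding h_def using pos[OF that] lp by auto
  define f where "f i s = ennreal (h s) * indicator {0..real i} s" for i :: nat and s
  have fint: "integral\<^sup>N lborel (f i) = ennreal (W 0 - W (real i))" for i
    unfolding f_def by (rule nn_integral_has_integral_lebesgue') (use h0 hint in auto)
  have fle: "integral\<^sup>N lborel (f i) \<le> ennreal C" for i
    unfolding fint using W0[of "real i"] WC by (intro ennreal_leI) auto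
  have cE: "continuous_on {0..} E"
    apply (rule continuous_on_vector_derivative[of _ _ "\<lambda>t. b * S t * I t - e * E t"])
    using dE by (simp add: has_real_derivative_iff_has_vector_derivative)
  have cI: "continuous_on {0..} I"
    apply (rule continuous_on_vector_derivative[of _ _ "\<lambda>t. e * E t - g * I t"])
    using dI by (simp add: has_real_derivative_iff_has_vector_derivative)
  have cont_h: "continuous_on {0..} h"
    unfolding h_def[abs_def] using cE cI by (intro continuous_intros)
  have fmeas: "f i \<in> borel_measurable lborel" for i
  proof -
    have feq: "f i = (\<lambda>s. ennreal (indicator {0..real i} s *\<^sub>R h s))"
      unfolding f_def by (rule ext) (auto simp: indicator_def)
    have "(\<lambda>s. indicator {0..real i} s *\<^sub>R h s) \<in> borel_measurable borel"
      by (rule borel_measurable_continuous_on_indicator)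
        (use continuous_on_subset[OF cont_h, of "{0..real i}"] in auto)
    then show ?thesis unfolding feq measurable_lborel2
      by (rule measurable_compose[OF _ measurable_ennreal])
  qed
  have finc: "incseq f"
  proof (rule incseq_SucI, rule le_funI)
    fix i s
    show "f i s \<le> f (Suc i) s"
      unfolding f_def by (auto simp: indicator_def)
  qed
  have fsup: "(SUP i. f i s) = ennreal (h s) * indicator {0..} s" for s
  proof (rule antisym)
    show "(SUP i. f i s) \<le> ennreal (h s) * indicator {0..} s"
      by (rule SUP_least) (auto simp: f_def indicator_def)
  next
    show "ennreal (h s) * indicator {0..} s \<le> (SUP i. f i s)"
    proof (cases "0 \<le> s")
      case True
      have "s \<le> real (nat \<lceil>s\<rceil>)" by (rule real_nat_ceiling_ge)
      then have "f (nat \<lceil>s\<rceil>) s = ennreal (h s) * indicator {0..} s"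
        using True by (simp add: f_def indicator_def)
      then show ?thesis by (metis SUP_upper UNIV_I)
    next
      case False
      then show ?thesis by simp
    qed
  qed
  have "(\<integral>\<^sup>+ s. ennreal (h s) * indicator {0..} s \<partial>lborel) = (SUP i. integral\<^sup>N lborel (f i))"
    using nn_integral_monotone_convergence_SUP[OF finc fmeas] fsup by simp
  also have "\<dots> \<le> ennreal C" by (rule SUP_least) (rule fle)
  finally have hC: "(\<integral>\<^sup>+ s. ennreal (h s) * indicator {0..} s \<partial>lborel) \<le> ennreal C" .
  have "(\<integral>\<^sup>+ s. ennreal (lam * ((E s)^2 + (I s)^2)) * indicator {0..} s \<partial>lborel)
        \<le> (\<integral>\<^sup>+ s. ennreal (h s) * indicator {0..} s \<partial>lborel)"
  proof (rule nn_integral_mono)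
    fix s
    show "ennreal (lam * ((E s)^2 + (I s)^2)) * indicator {0..} s \<le> ennreal (h s) * indicator {0..} s"
    proof (cases "0 \<le> s")
      case True
      have "(E s)^2 \<le> E s" using pos[OF True] E1[OF True]
        by (simp add: power2_eq_square mult_left_le)
      moreover have "(I s)^2 \<le> I s" using pos[OF True] I1[OF True]
        by (simp add: power2_eq_square mult_left_le)
      ultimately have "lam * ((E s)^2 + (I s)^2) \<le> h s"
        unfolding h_def using lp by (intro mult_left_mono) auto
      then show ?thesis using True by (simp add: ennreal_leI)
    next
      case False
      then show ?thesis by simp
    qed
  qed
  then show ?thesis using hC unfolding C_def by simp
qed


theorem lemma2:
  fixes eta beta_min beta_nom gamma_nom gamma_max I_max lam :: real
  assumes "eta > 0" and "0 < beta_min" and "beta_min < beta_nom"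
    and "0 < gamma_nom" and "gamma_nom < gamma_max"
    and "0 < I_max" and "I_max \<le> 1"
    and "0 < lam" and "lam \<le> 1"
  shows "\<exists>C::real. C \<ge> 0 \<and>
    (\<forall>x0 \<in> XM_set eta beta_nom gamma_nom I_max. \<forall>x.
       seir_solution eta (\<lambda>_. u_nom beta_nom gamma_nom) x0 x \<longrightarrow>
       J_inf lam beta_nom gamma_nom x (\<lambda>_. u_nom beta_nom gamma_nom) \<le> ennreal C)"
proof (intro exI conjI ballI allI impI)
  have bp: "beta_nom > 0" using assms by simp
  show "0 \<le> lam * (1 / eta + 1 / gamma_nom)" using assms by simp
  fix x0 x
  assume x0: "x0 \<in> XM_set eta beta_nom gamma_nom I_max"
    and sol: "seir_solution eta (\<lambda>_. u_nom beta_nom gamma_nom) x0 x"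
  have dx: "(x has_vector_derivative seir_f eta (x t) (u_nom beta_nom gamma_nom)) (at t within {0..})"
    if "0 \<le> t" for t using sol that unfolding seir_solution_def by simp
  have dc: "((\<lambda>t. x t $ i) has_real_derivative (seir_f eta (x t) (u_nom beta_nom gamma_nom)) $ i) (at t within {0..})"
    if "0 \<le> t" for t i
    using bounded_linear.has_vector_derivative[OF bounded_linear_vec_nth dx[OF that], of i]
    by (simp add: has_real_derivative_iff_has_vector_derivative)
  have fx: "seir_f eta y (u_nom beta_nom gamma_nom) $ 1 = - beta_nom * y $ 1 * y $ 3"
    "seir_f eta y (u_nom beta_nom gamma_nom) $ 2 = beta_nom * y $ 1 * y $ 3 - eta * y $ 2"
    "seir_f eta y (u_nom beta_nom gamma_nom) $ 3 = eta * y $ 2 - gamma_nom * y $ 3" for y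
    unfolding seir_f_def u_nom_def by simp_all
  have x00: "x 0 = x0" using sol unfolding seir_solution_def by simp
  have xin: "0 \<le> x0 $ 1" "0 \<le> x0 $ 2" "0 \<le> x0 $ 3" "x0 $ 1 + x0 $ 2 + x0 $ 3 \<le> 1"
    using x0 unfolding XM_set_def X_set_def by auto
  have cb: "(\<integral>\<^sup>+ s. ennreal (lam * ((x s $ 2)^2 + (x s $ 3)^2)) * indicator {0..} s \<partial>lborel)
          \<le> ennreal (lam * (1 / eta + 1 / gamma_nom))"
    by (rule cost_bound[where S="\<lambda>t. x t $ 1" and b=beta_nom])
      (use assms bp dc[of _ 1] dc[of _ 2] dc[of _ 3] fx x00 xin in auto)
  have sc: "stage_cost lam beta_nom gamma_nom y (u_nom beta_nom gamma_nom) = lam * ((y $ 2)^2 + (y $ 3)^2)" for y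
    unfolding stage_cost_def by simp
  show "J_inf lam beta_nom gamma_nom x (\<lambda>_. u_nom beta_nom gamma_nom) \<le> ennreal (lam * (1 / eta + 1 / gamma_nom))"
    unfolding J_inf_def sc using cb .
qed

end
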